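(* For distinct $a,b,c,d$, in $A(\mathcal{H}^+)$: (i) $\mathcal{M}_{ab}*\bar{\mathcal{M}}_{cd}=0$ and $\bar{\mathcal{M}}_{cd}*\mathcal{M}_{ab}=0$; (ii) $[\Lambda_{ab}]*[\Lambda_{cd}]=[S_{ab}]*[S_{cd}]$.
   Context: $\mathfrak{h}$ is an $\ell$-dimensional complex space with orthonormal basis $h_1,\dots,h_\ell$; $\mathcal{H}=M(1,0)$ the free bosonic vertex operator algebra generated by Heisenberg modes $h(n)$ on vacuum $\mathbf{1}$; $\mathcal{H}^+$ the fixed points of the automorphism induced by $h\mapsto-h$; $A(\mathcal{H}^+)=\mathcal{H}^+/O(\mathcal{H}^+)$ Zhu's algebra ($O$ spanned by $u\circ v=\sum_{i\ge0}\binom{\mathrm{wt}\,u}{i}u_{i-2}v$, product induced by $u*v=\sum_{i\ge0}\binom{\mathrm{wt}\,u}{i}u_{i-1}v$), $[u]=u+O(\mathcal{H}^+)$. For distinct $x,y$: $S_{xy}(1,m)=h_x(-1)h_y(-m)\mathbf{1}$, $S_{xy}=S_{xy}(1,1)$, $E^u_{xy}=5S_{xy}(1,2)+25S_{xy}(1,3)+36S_{xy}(1,4)+16S_{xy}(1,5)$, $E^t_{xy}=-16\big(3S_{xy}(1,2)+14S_{xy}(1,3)+19S_{xy}(1,4)+8S_{xy}(1,5)\big)$, $\Lambda_{xy}=45S_{xy}(1,2)+190S_{xy}(1,3)+240S_{xy}(1,4)+96S_{xy}(1,5)$. $\mathcal{M}_{xy}$ is the span of $[E^u_{xy}],[E^u_{yx}],[E^t_{xy}],[E^t_{yx}]$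 and $\bar{\mathcal{M}}_{xy}=\mathcal{M}_{xy}+\mathbb{C}[\Lambda_{xy}]$. *)

theory Defs
  imports Complex_Main "HOL-Library.Multiset" "HOL-Library.Function_Algebras" "HOL-Library.Product_Lexorder"
begin

text \<open>Concrete model of the Heisenberg (free boson) VOA M(1,0) on an l-dimensional space
with orthonormal basis h_0,...,h_(l-1).  A Fock monomial h_{i1}(-n1)...h_{ik}(-nk)1 (n_j >= 1)
is a multiset of pairs (i,n); a state is a finitely supported complex function on monomials.\<close>

type_synonym mon = "(nat \<times> nat) multiset"
type_synonym vec = "mon \<Rightarrow> complex"

definition supp :: "vec \<Rightarrow> mon set" where
  "supp v = {m. v m \<noteq> 0}"

definition sc :: "complex \<Rightarrow> vec \<Rightarrow> vec" where
  "sc c v = (\<lambda>m. c * v m)"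

definition mono :: "mon \<Rightarrow> vec" where
  "mono m = (\<lambda>m'. if m' = m then 1 else 0)"

definition vac :: vec where
  "vac = mono {#}"

definition lin :: "(mon \<Rightarrow> vec) \<Rightarrow> vec \<Rightarrow> vec" where
  "lin f v = (\<lambda>w. \<Sum>m\<in>supp v. v m * f m w)"

text \<open>Heisenberg mode h_i(n) on a basis monomial: creation for n<0, n times derivative for n>0,
zero for n=0 (charge zero module), so that [h_i(m),h_j(n)] = m delta_ij delta_(m+n,0).\<close>
definition hmon :: "nat \<Rightarrow> int \<Rightarrow> mon \<Rightarrow> vec" where
  "hmon i n m =
     (if n < 0 then mono (add_mset (i, nat (- n)) m)
      else if n = 0 then (\<lambda>_. 0)
      else sc (of_int n * of_nat (count m (i, nat n))) (mono (m - {#(i, nat n)#})))"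

definition hmode :: "nat \<Rightarrow> int \<Rightarrow> vec \<Rightarrow> vec" where
  "hmode i n v = lin (hmon i n) v"

definition apply_ops :: "(nat \<times> int) list \<Rightarrow> vec \<Rightarrow> vec" where
  "apply_ops ops w = foldr (\<lambda>(i, n) acc. hmode i n acc) ops w"

text \<open>Normally ordered product of modes applied to a basis monomial:
annihilation modes (n >= 0) act first, creation modes (n < 0) afterwards.\<close>
definition normal_apply :: "(nat \<times> int) list \<Rightarrow> mon \<Rightarrow> vec" where
  "normal_apply ops b =
     apply_ops (filter (\<lambda>(i, n). n < 0) ops) (apply_ops (filter (\<lambda>(i, n). 0 \<le> n) ops) (mono b))"

text \<open>Mode u_p of the vertex operator Y(u,z) = :prod_j d^(n_j-1)h_{i_j}(z)/(n_j-1)!: for a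
basis monomial u, applied to a basis monomial b.  The coefficient of z^(-m-n) in
d^(n-1)h(z)/(n-1)! is binom(-m-1,n-1) h(m).  The sum over mode tuples is infinite in
principle, but only tuples in the box [-B,B]^k can contribute when acting on b.\<close>
definition ymon :: "mon \<Rightarrow> int \<Rightarrow> mon \<Rightarrow> vec" where
  "ymon a p b =
    (let fs = sorted_list_of_multiset a;
         k = length fs;
         N = sum_list (map snd fs);
         W = Max (insert 0 (snd ` set_mset b));
         B = \<bar>p\<bar> + int N + int k * (int W + 1) + 1
     in (\<lambda>w. \<Sum>ms\<in>{ms :: int list. length ms = k \<and> set ms \<subseteq> {-B..B}}.
            if (\<Sum>j<k. ms ! j + int (snd (fs ! j))) = p + 1
            then (\<Prod>j<k. (of_int (- ms ! j - 1) :: complex) gchoose (snd (fs ! j) - 1))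
                 * normal_apply (zip (map fst fs) ms) b w
            else 0))"

definition Ymode :: "vec \<Rightarrow> int \<Rightarrow> vec \<Rightarrow> vec" where
  "Ymode u p v = (\<lambda>w. \<Sum>a\<in>supp u. \<Sum>b\<in>supp v. u a * v b * ymon a p b w)"

definition wt :: "mon \<Rightarrow> nat" where
  "wt m = sum_mset (image_mset snd m)"

definition wcomp :: "nat \<Rightarrow> vec \<Rightarrow> vec" where
  "wcomp d u = (\<lambda>m. if wt m = d then u m else 0)"

definition homogeneous :: "vec \<Rightarrow> bool" where
  "homogeneous u \<longleftrightarrow> (\<exists>d. \<forall>m. u m \<noteq> 0 \<longrightarrow> wt m = d)"

text \<open>Zhu's product u*v = sum_i binom(wt u,i) u_(i-1) v and u o v = sum_i binom(wt u,i) u_(i-2) v,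
for homogeneous u, extended linearly in u.\<close>
definition zstar :: "vec \<Rightarrow> vec \<Rightarrow> vec" where
  "zstar u v = (\<lambda>w. \<Sum>d\<in>wt ` supp u. \<Sum>i\<le>d. of_nat (d choose i) * Ymode (wcomp d u) (int i - 1) v w)"

definition zcirc :: "vec \<Rightarrow> vec \<Rightarrow> vec" where
  "zcirc u v = (\<lambda>w. \<Sum>d\<in>wt ` supp u. \<Sum>i\<le>d. of_nat (d choose i) * Ymode (wcomp d u) (int i - 2) v w)"

definition cspan :: "vec set \<Rightarrow> vec set" where
  "cspan S = {v. \<exists>F c. finite F \<and> F \<subseteq> S \<and> v = (\<lambda>m. \<Sum>x\<in>F. c x * x m)}"

text \<open>The VOA H = M(1,0) for an l-dimensional h (indices < l), the involution theta induced
by h -> -h, and the fixed point subVOA H^+.\<close>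
definition Hspace :: "nat \<Rightarrow> vec set" where
  "Hspace l = {v. finite (supp v) \<and> (\<forall>m\<in>supp v. \<forall>x\<in>set_mset m. fst x < l \<and> 1 \<le> snd x)}"

definition theta :: "vec \<Rightarrow> vec" where
  "theta v = (\<lambda>m. (-1) ^ size m * v m)"

definition Hplus :: "nat \<Rightarrow> vec set" where
  "Hplus l = {v \<in> Hspace l. theta v = v}"

text \<open>O(H^+); the class equation [u]*[v] = [w] in A(H^+) means zstar u v - w \<in> Ozhu l.\<close>
definition Ozhu :: "nat \<Rightarrow> vec set" where
  "Ozhu l = cspan {zcirc u v | u v. u \<in> Hplus l \<and> v \<in> Hplus l \<and> homogeneous u}"

definition Sv :: "nat \<Rightarrow> nat \<Rightarrow> nat \<Rightarrow> vec" where
  "Sv x y m = hmode x (-1) (hmode y (- int m) vac)"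

definition Eu :: "nat \<Rightarrow> nat \<Rightarrow> vec" where
  "Eu x y = sc 5 (Sv x y 2) + sc 25 (Sv x y 3) + sc 36 (Sv x y 4) + sc 16 (Sv x y 5)"

definition Et :: "nat \<Rightarrow> nat \<Rightarrow> vec" where
  "Et x y = sc (-16) (sc 3 (Sv x y 2) + sc 14 (Sv x y 3) + sc 19 (Sv x y 4) + sc 8 (Sv x y 5))"

definition Lam :: "nat \<Rightarrow> nat \<Rightarrow> vec" where
  "Lam x y = sc 45 (Sv x y 2) + sc 190 (Sv x y 3) + sc 240 (Sv x y 4) + sc 96 (Sv x y 5)"

text \<open>Representatives of M_xy and of Mbar_xy (spans of the classes = classes of the spans).\<close>
definition Mspace :: "nat \<Rightarrow> nat \<Rightarrow> vec set" where
  "Mspace x y = cspan {Eu x y, Eu y x, Et x y, Et y x}"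

definition Mbar :: "nat \<Rightarrow> nat \<Rightarrow> vec set" where
  "Mbar x y = cspan {Eu x y, Eu y x, Et x y, Et y x, Lam x y}"

end

theory Submission
  imports Defs
begin


lemma supp_mono[simp]: "supp (mono m) = {m}"
  by (auto simp: supp_def mono_def)

lemma lin_mono[simp]: "lin f (mono m) = f m"
  by (simp add: lin_def fun_eq_iff, simp add: mono_def)

lemma hmode_mono[simp]: "hmode i n (mono m) = hmon i n m"
  by (simp add: hmode_def)

lemma supp_zero[simp]: "supp (\<lambda>_. 0) = {}"
  by (simp add: supp_def)

lemma hmode_zero[simp]: "hmode i n (\<lambda>_. 0) = (\<lambda>_. 0)"
  by (simp add: hmode_def lin_def fun_eq_iff)

lemma hmon_absent:
  assumes "\<forall>p\<in>set_mset m. fst p \<noteq> i" "0 \<le> n"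
  shows "hmon i n m = (\<lambda>_. 0)"
proof -
  have "count m (i, nat n) = 0" using assms(1) by (auto simp: count_eq_zero_iff)
  then show ?thesis using assms(2) by (auto simp: hmon_def sc_def fun_eq_iff)
qed

lemma hmon_neg: "n < 0 \<Longrightarrow> hmon i n m = mono (add_mset (i, nat (-n)) m)"
  by (simp add: hmon_def)

lemma normal_apply2:
  assumes "\<forall>p\<in>set_mset m. fst p \<noteq> i1 \<and> fst p \<noteq> i2"
  shows "normal_apply [(i1,m1),(i2,m2)] m =
    (if m1 < 0 \<and> m2 < 0 then mono (add_mset (i1, nat (-m1)) (add_mset (i2, nat (-m2)) m)) else (\<lambda>_. 0))"
proof -
  have a1: "hmon i1 n m = (\<lambda>_. 0)" if "0 \<le> n" for n using hmon_absent[of m i1 n] assms that by auto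
  have a2: "hmon i2 n m = (\<lambda>_. 0)" if "0 \<le> n" for n using hmon_absent[of m i2 n] assms that by auto
  show ?thesis
    by (cases "m1 < 0"; cases "m2 < 0") (auto simp: normal_apply_def apply_ops_def hmon_neg a1 a2)
qed



definition Cf :: "int \<Rightarrow> nat \<Rightarrow> complex" where
  "Cf m n = of_nat (nat (-m-1) choose (n-1))"

lemma gchoose_neg: "m < 0 \<Longrightarrow> (of_int (-m-1) :: complex) gchoose k = of_nat (nat(-m-1) choose k)"
proof -
  assume "m < 0"
  then have "(of_int (-m-1) :: complex) = of_nat (nat (-m-1))" by simp
  then show ?thesis by (simp add: binomial_gbinomial)
qed

lemma Cf_zero: "x > - int n \<Longrightarrow> x < 0 \<Longrightarrow> n \<ge> 1 \<Longrightarrow> Cf x n = 0"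
  unfolding Cf_def by (simp add: binomial_eq_0_iff nat_less_iff)

lemma Cf_exact: "n \<ge> 1 \<Longrightarrow> Cf (- int n) n = 1"
  unfolding Cf_def by (simp add: nat_diff_distrib')

lemma Cf_next: "n \<ge> 1 \<Longrightarrow> Cf (- int n - 1) n = of_nat n"
proof -
  assume "n \<ge> 1"
  then have "nat (- (- int n - 1) - 1) = n" by simp
  moreover have "n choose (n - 1) = n" using binomial_symmetric[of 1 n] \<open>n \<ge> 1\<close> by simp
  ultimately show ?thesis unfolding Cf_def by simp
qed

lemma len2: "length ms = 2 \<Longrightarrow> ms = [ms!0, ms!1]"
  by (cases ms; cases "tl ms"; auto)

lemma ymon2_sum:
  assumes sl: "sorted_list_of_multiset \<alpha> = [(i1,n1),(i2,n2)]"
    and ab: "\<forall>p\<in>set_mset \<beta>. fst p \<noteq> i1 \<and> fst p \<noteq> i2"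
  shows "\<exists>B. int n1 + int n2 + \<bar>p\<bar> + 1 \<le> B \<and> ymon \<alpha> p \<beta> w =
    (\<Sum>ms\<in>{ms::int list. length ms = 2 \<and> set ms \<subseteq> {-B..B}}.
       if ms!0 + ms!1 + int n1 + int n2 = p+1 \<and> ms!0 < 0 \<and> ms!1 < 0
       then Cf (ms!0) n1 * Cf (ms!1) n2 * mono (add_mset (i1, nat(-(ms!0))) (add_mset (i2, nat(-(ms!1))) \<beta>)) w
       else 0)"
proof -
  define W where "W = Max (insert 0 (snd ` set_mset \<beta>))"
  define B where "B = \<bar>p\<bar> + int (n1 + n2) + int 2 * (int W + 1) + 1"
  have "int n1 + int n2 + \<bar>p\<bar> + 1 \<le> B" unfolding B_def by simp
  moreover have "ymon \<alpha> p \<beta> w =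
    (\<Sum>ms\<in>{ms::int list. length ms = 2 \<and> set ms \<subseteq> {-B..B}}.
       if ms!0 + ms!1 + int n1 + int n2 = p+1 \<and> ms!0 < 0 \<and> ms!1 < 0
       then Cf (ms!0) n1 * Cf (ms!1) n2 * mono (add_mset (i1, nat(-(ms!0))) (add_mset (i2, nat(-(ms!1))) \<beta>)) w
       else 0)"
    unfolding ymon_def Let_def sl
  proof (rule sum.cong)
    show "{ms. length ms = length [(i1, n1), (i2, n2)] \<and>
          set ms \<subseteq> {- (\<bar>p\<bar> + int (sum_list (map snd [(i1, n1), (i2, n2)])) +
                          int (length [(i1, n1), (i2, n2)]) * (int (Max (insert 0 (snd ` set_mset \<beta>))) + 1) + 1)..
                    \<bar>p\<bar> + int (sum_list (map snd [(i1, n1), (i2, n2)])) +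
                    int (length [(i1, n1), (i2, n2)]) * (int (Max (insert 0 (snd ` set_mset \<beta>))) + 1) + 1}}
          = {ms::int list. length ms = 2 \<and> set ms \<subseteq> {-B..B}}"
      unfolding B_def W_def by (simp add: numeral_2_eq_2)
  next
    fix ms :: "int list" assume "ms \<in> {ms::int list. length ms = 2 \<and> set ms \<subseteq> {-B..B}}"
    then have "length ms = 2" by simp
    then obtain x y where ms: "ms = [x,y]" using len2 by blast
    show "(if (\<Sum>j<length [(i1,n1),(i2,n2)]. ms ! j + int (snd ([(i1,n1),(i2,n2)] ! j))) = p + 1
            then (\<Prod>j<length [(i1,n1),(i2,n2)]. (of_int (- ms ! j - 1) :: complex) gchoose (snd ([(i1,n1),(i2,n2)] ! j) - 1))
                 * normal_apply (zip (map fst [(i1,n1),(i2,n2)]) ms) \<beta> w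
            else 0) =
       (if ms!0 + ms!1 + int n1 + int n2 = p+1 \<and> ms!0 < 0 \<and> ms!1 < 0
       then Cf (ms!0) n1 * Cf (ms!1) n2 * mono (add_mset (i1, nat(-(ms!0))) (add_mset (i2, nat(-(ms!1))) \<beta>)) w
       else 0)"
    proof -
      have s: "(\<Sum>j<length [(i1,n1),(i2,n2)]. [x,y] ! j + int (snd ([(i1,n1),(i2,n2)] ! j))) = x + y + int n1 + int n2"
        by (simp add: numeral_2_eq_2)
      have p: "(\<Prod>j<length [(i1,n1),(i2,n2)]. (of_int (- [x,y] ! j - 1) :: complex) gchoose (snd ([(i1,n1),(i2,n2)] ! j) - 1))
           = ((of_int (-x-1) :: complex) gchoose (n1-1)) * ((of_int (-y-1) :: complex) gchoose (n2-1))"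
        by (simp add: numeral_2_eq_2 del: of_int_diff of_int_minus)
      have z: "zip (map fst [(i1,n1),(i2,n2)]) [x,y] = [(i1,x),(i2,y)]" by simp
      show ?thesis unfolding ms s p z normal_apply2[OF ab]
        by (auto simp: gchoose_neg Cf_def simp del: of_int_diff of_int_minus)
    qed
  qed
  ultimately show ?thesis by blast
qed



lemma summ_m1:
  assumes "n1 \<ge> 1" "n2 \<ge> 1"
  shows "(if x + y + int n1 + int n2 = -1+1 \<and> x<0 \<and> y<0 then Cf x n1 * Cf y n2 * M x y else 0)
       = (if [x,y] = [-int n1, -int n2] then M (-int n1) (-int n2) else 0)"
proof (cases "x = - int n1 \<and> y = - int n2")
  case True then show ?thesis using assms by (simp add: Cf_exact)
next
  case False
  then have "x + y + int n1 + int n2 = 0 \<and> x < 0 \<and> y < 0 \<Longrightarrow> x > - int n1 \<or> y > - int n2" by linarith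
  then show ?thesis using False assms by (auto simp: Cf_zero)
qed

lemma summ_m2:
  assumes "n1 \<ge> 1" "n2 \<ge> 1"
  shows "(if x + y + int n1 + int n2 = -2+1 \<and> x<0 \<and> y<0 then Cf x n1 * Cf y n2 * M x y else 0)
       = (if [x,y] = [-int n1 - 1, -int n2] then of_nat n1 * M (-int n1 - 1) (-int n2) else 0)
       + (if [x,y] = [-int n1, -int n2 - 1] then of_nat n2 * M (-int n1) (-int n2 - 1) else 0)"
proof -
  consider "x = - int n1 - 1 \<and> y = - int n2" | "x = - int n1 \<and> y = - int n2 - 1"
    | "\<not> (x + y + int n1 + int n2 = -2+1 \<and> x<0 \<and> y<0)"
    | "x > - int n1 \<or> y > - int n2" by linarith
  then show ?thesis
  proof cases
    case 1 then show ?thesis using assms by (simp add: Cf_exact Cf_next)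
  next
    case 2 then show ?thesis using assms by (simp add: Cf_exact Cf_next)
  next
    case 3 then show ?thesis using assms by auto
  next
    case 4 then show ?thesis using assms by (auto simp: Cf_zero)
  qed
qed

lemma summ_pos:
  assumes "n1 \<ge> 1" "n2 \<ge> 1" "p \<ge> 0"
  shows "(if x + y + int n1 + int n2 = p+1 \<and> x<0 \<and> y<0 then Cf x n1 * Cf y n2 * M x y else 0) = 0"
proof -
  have "x + y + int n1 + int n2 = p+1 \<and> x<0 \<and> y<0 \<Longrightarrow> x > - int n1 \<or> y > - int n2" using assms by linarith
  then show ?thesis using assms by (auto simp: Cf_zero)
qed

lemma summ_m1':
  assumes "n1 \<ge> 1" "n2 \<ge> 1" "length ms = 2"
  shows "(if ms!0 + ms!1 + int n1 + int n2 = -1+1 \<and> ms!0<0 \<and> ms!1<0 then Cf (ms!0) n1 * Cf (ms!1) n2 * M (ms!0) (ms!1) else 0)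
       = (if ms = [-int n1, -int n2] then M (-int n1) (-int n2) else 0)"
proof -
  obtain x y where ms: "ms = [x,y]" using len2[OF assms(3)] by blast
  have e: "[x,y]!0 = x" "[x,y]!1 = y" by simp_all
  show ?thesis unfolding ms e by (rule summ_m1[OF assms(1,2)])
qed

lemma summ_m2':
  assumes "n1 \<ge> 1" "n2 \<ge> 1" "length ms = 2"
  shows "(if ms!0 + ms!1 + int n1 + int n2 = -2+1 \<and> ms!0<0 \<and> ms!1<0 then Cf (ms!0) n1 * Cf (ms!1) n2 * M (ms!0) (ms!1) else 0)
       = (if ms = [-int n1 - 1, -int n2] then of_nat n1 * M (-int n1 - 1) (-int n2) else 0)
       + (if ms = [-int n1, -int n2 - 1] then of_nat n2 * M (-int n1) (-int n2 - 1) else 0)"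
proof -
  obtain x y where ms: "ms = [x,y]" using len2[OF assms(3)] by blast
  have e: "[x,y]!0 = x" "[x,y]!1 = y" by simp_all
  show ?thesis unfolding ms e by (rule summ_m2[OF assms(1,2)])
qed

lemma summ_pos':
  assumes "n1 \<ge> 1" "n2 \<ge> 1" "p \<ge> 0" "length ms = 2"
  shows "(if ms!0 + ms!1 + int n1 + int n2 = p+1 \<and> ms!0<0 \<and> ms!1<0 then Cf (ms!0) n1 * Cf (ms!1) n2 * M (ms!0) (ms!1) else 0) = 0"
proof -
  obtain x y where ms: "ms = [x,y]" using len2[OF assms(4)] by blast
  have e: "[x,y]!0 = x" "[x,y]!1 = y" by simp_all
  show ?thesis unfolding ms e by (rule summ_pos[OF assms(1,2,3)])
qed

lemma box_finite[simp]: "finite {ms::int list. length ms = k \<and> set ms \<subseteq> {-B..B}}"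
proof -
  have "{ms::int list. length ms = k \<and> set ms \<subseteq> {-B..B}} = {xs. set xs \<subseteq> {-B..B} \<and> length xs = k}" by auto
  then show ?thesis using finite_lists_length_eq[of "{-B..B}" k] by simp
qed

lemma box_mem: "length ms = 2 \<Longrightarrow> \<bar>ms!0\<bar> \<le> B \<Longrightarrow> \<bar>ms!1\<bar> \<le> B \<Longrightarrow> ms \<in> {ms::int list. length ms = 2 \<and> set ms \<subseteq> {-B..B}}"
  by (subst len2, assumption, auto)

lemma box_mem2: "\<bar>x\<bar> \<le> B \<Longrightarrow> \<bar>y\<bar> \<le> B \<Longrightarrow> [x,y] \<in> {ms::int list. length ms = 2 \<and> set ms \<subseteq> {-B..B}}"
  by auto

locale two =
  fixes \<alpha> \<beta> :: mon and i1 i2 n1 n2 :: nat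
  assumes sl: "sorted_list_of_multiset \<alpha> = [(i1,n1),(i2,n2)]"
    and ab: "\<forall>p\<in>set_mset \<beta>. fst p \<noteq> i1 \<and> fst p \<noteq> i2"
    and n1: "n1 \<ge> 1" and n2: "n2 \<ge> 1"
begin

lemma ymon_m1: "ymon \<alpha> (-1) \<beta> = mono (add_mset (i1,n1) (add_mset (i2,n2) \<beta>))"
proof
  fix w
  obtain B where B: "int n1 + int n2 + \<bar>-1\<bar> + 1 \<le> B" and e: "ymon \<alpha> (-1) \<beta> w =
    (\<Sum>ms\<in>{ms::int list. length ms = 2 \<and> set ms \<subseteq> {-B..B}}.
       if ms!0 + ms!1 + int n1 + int n2 = -1+1 \<and> ms!0 < 0 \<and> ms!1 < 0
       then Cf (ms!0) n1 * Cf (ms!1) n2 * mono (add_mset (i1, nat(-(ms!0))) (add_mset (i2, nat(-(ms!1))) \<beta>)) w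
       else 0)" using ymon2_sum[OF sl ab] by blast
  note e
  also have "\<dots> = (\<Sum>ms\<in>{ms::int list. length ms = 2 \<and> set ms \<subseteq> {-B..B}}.
       if ms = [-int n1, -int n2] then mono (add_mset (i1, nat(- (-int n1))) (add_mset (i2, nat(- (-int n2))) \<beta>)) w else 0)"
    by (rule sum.cong[OF refl], rule summ_m1'[OF n1 n2, where M = "\<lambda>x y. mono (add_mset (i1, nat(-x)) (add_mset (i2, nat(-y)) \<beta>)) w"], auto)
  also have "\<dots> = mono (add_mset (i1,n1) (add_mset (i2,n2) \<beta>)) w"
    using B by (subst sum.delta) auto
  finally show "ymon \<alpha> (-1) \<beta> w = mono (add_mset (i1,n1) (add_mset (i2,n2) \<beta>)) w" .
qed


lemma ymon_m2: "ymon \<alpha> (-2) \<beta> = sc (of_nat n1) (mono (add_mset (i1,n1+1) (add_mset (i2,n2) \<beta>)))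
                                + sc (of_nat n2) (mono (add_mset (i1,n1) (add_mset (i2,n2+1) \<beta>)))"
proof
  fix w
  obtain B where B: "int n1 + int n2 + \<bar>-2\<bar> + 1 \<le> B" and e: "ymon \<alpha> (-2) \<beta> w =
    (\<Sum>ms\<in>{ms::int list. length ms = 2 \<and> set ms \<subseteq> {-B..B}}.
       if ms!0 + ms!1 + int n1 + int n2 = -2+1 \<and> ms!0 < 0 \<and> ms!1 < 0
       then Cf (ms!0) n1 * Cf (ms!1) n2 * mono (add_mset (i1, nat(-(ms!0))) (add_mset (i2, nat(-(ms!1))) \<beta>)) w
       else 0)" using ymon2_sum[OF sl ab] by blast
  note e
  also have "\<dots> = (\<Sum>ms\<in>{ms::int list. length ms = 2 \<and> set ms \<subseteq> {-B..B}}.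
       (if ms = [-int n1 - 1, -int n2] then of_nat n1 * mono (add_mset (i1, nat(- (-int n1 - 1))) (add_mset (i2, nat(- (-int n2))) \<beta>)) w else 0)
     + (if ms = [-int n1, -int n2 - 1] then of_nat n2 * mono (add_mset (i1, nat(- (-int n1))) (add_mset (i2, nat(- (-int n2 - 1))) \<beta>)) w else 0))"
    by (rule sum.cong[OF refl], rule summ_m2'[OF n1 n2, where M = "\<lambda>x y. mono (add_mset (i1, nat(-x)) (add_mset (i2, nat(-y)) \<beta>)) w"], auto)
  also have "\<dots> = (sc (of_nat n1) (mono (add_mset (i1,n1+1) (add_mset (i2,n2) \<beta>)))
                                + sc (of_nat n2) (mono (add_mset (i1,n1) (add_mset (i2,n2+1) \<beta>)))) w"
    using B by (simp add: sum.distrib sc_def nat_add_distrib)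
  finally show "ymon \<alpha> (-2) \<beta> w = (sc (of_nat n1) (mono (add_mset (i1,n1+1) (add_mset (i2,n2) \<beta>)))
                                + sc (of_nat n2) (mono (add_mset (i1,n1) (add_mset (i2,n2+1) \<beta>)))) w" .
qed

lemma ymon_pos: "p \<ge> 0 \<Longrightarrow> ymon \<alpha> p \<beta> = (\<lambda>_. 0)"
proof
  fix w assume p: "p \<ge> 0"
  obtain B where e: "ymon \<alpha> p \<beta> w =
    (\<Sum>ms\<in>{ms::int list. length ms = 2 \<and> set ms \<subseteq> {-B..B}}.
       if ms!0 + ms!1 + int n1 + int n2 = p+1 \<and> ms!0 < 0 \<and> ms!1 < 0
       then Cf (ms!0) n1 * Cf (ms!1) n2 * mono (add_mset (i1, nat(-(ms!0))) (add_mset (i2, nat(-(ms!1))) \<beta>)) w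
       else 0)" using ymon2_sum[OF sl ab] by blast
  note e
  also have "\<dots> = (\<Sum>ms\<in>{ms::int list. length ms = 2 \<and> set ms \<subseteq> {-B..B}}. 0)"
    by (rule sum.cong[OF refl], rule summ_pos'[OF n1 n2 p, where M = "\<lambda>x y. mono (add_mset (i1, nat(-x)) (add_mset (i2, nat(-y)) \<beta>)) w"], auto)
  finally show "ymon \<alpha> p \<beta> w = 0" by simp
qed

end



definition absent :: "mon \<Rightarrow> nat \<Rightarrow> bool" where
  "absent \<beta> i \<longleftrightarrow> (\<forall>p\<in>set_mset \<beta>. fst p \<noteq> i)"

lemma two_pair:
  assumes "absent \<beta> i" "absent \<beta> j" "x \<ge> 1" "y \<ge> 1"
  shows "two {#(i,x),(j,y)#} \<beta> i j x y \<or> two {#(i,x),(j,y)#} \<beta> j i y x"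
  using assms unfolding two_def absent_def by auto

lemma ymon_pair_m1:
  assumes "absent \<beta> i" "absent \<beta> j" "x \<ge> 1" "y \<ge> 1"
  shows "ymon {#(i,x),(j,y)#} (-1) \<beta> = mono (add_mset (i,x) (add_mset (j,y) \<beta>))"
proof -
  from two_pair[OF assms] show ?thesis
  proof
    assume "two {#(i,x),(j,y)#} \<beta> i j x y"
    from two.ymon_m1[OF this] show ?thesis .
  next
    assume "two {#(i,x),(j,y)#} \<beta> j i y x"
    from two.ymon_m1[OF this] show ?thesis by (simp add: add_mset_commute)
  qed
qed

lemma ymon_pair_m2:
  assumes "absent \<beta> i" "absent \<beta> j" "x \<ge> 1" "y \<ge> 1"
  shows "ymon {#(i,x),(j,y)#} (-2) \<beta> = sc (of_nat x) (mono (add_mset (i,x+1) (add_mset (j,y) \<beta>)))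
                                + sc (of_nat y) (mono (add_mset (i,x) (add_mset (j,y+1) \<beta>)))"
proof -
  from two_pair[OF assms] show ?thesis
  proof
    assume "two {#(i,x),(j,y)#} \<beta> i j x y"
    from two.ymon_m2[OF this] show ?thesis .
  next
    assume "two {#(i,x),(j,y)#} \<beta> j i y x"
    from two.ymon_m2[OF this] show ?thesis by (simp add: add_mset_commute add.commute)
  qed
qed

lemma ymon_pair_pos:
  assumes "absent \<beta> i" "absent \<beta> j" "x \<ge> 1" "y \<ge> 1" "p \<ge> 0"
  shows "ymon {#(i,x),(j,y)#} p \<beta> = (\<lambda>_. 0)"
  using two_pair[OF assms(1-4)] two.ymon_pos[OF _ assms(5)] by blast

lemma wt_pair[simp]: "wt {#(i,x),(j,y)#} = x + y"
  by (simp add: wt_def)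

lemma Ymode_mono[simp]: "Ymode (mono a) p (mono b) = ymon a p b"
  by (simp add: Ymode_def fun_eq_iff, simp add: mono_def)

lemma wcomp_mono[simp]: "wcomp (wt a) (mono a) = mono a"
  by (auto simp: wcomp_def mono_def fun_eq_iff)

lemma zcirc_pair:
  assumes "absent \<beta> i" "absent \<beta> j" "x \<ge> 1" "y \<ge> 1"
  shows "zcirc (mono {#(i,x),(j,y)#}) (mono \<beta>) =
     sc (of_nat x) (mono (add_mset (i,x+1) (add_mset (j,y) \<beta>)))
   + sc (of_nat y) (mono (add_mset (i,x) (add_mset (j,y+1) \<beta>)))
   + sc (of_nat (x+y)) (mono (add_mset (i,x) (add_mset (j,y) \<beta>)))"
proof
  fix w
  let ?a = "{#(i,x),(j,y)#}"
  let ?f = "\<lambda>k. of_nat ((x+y) choose k) * ymon ?a (int k - 2) \<beta> w"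
  have "zcirc (mono ?a) (mono \<beta>) w = (\<Sum>k\<le>x+y. ?f k)"
    unfolding zcirc_def using wcomp_mono[of ?a] by simp
  also have "\<dots> = (\<Sum>k\<in>{0,1}. ?f k)"
  proof (rule sum.mono_neutral_right)
    show "{0,1} \<subseteq> {..x+y}" using assms by auto
    show "\<forall>k\<in>{..x+y} - {0,1}. ?f k = 0"
      using ymon_pair_pos[OF assms] by auto
  qed simp
  also have "\<dots> = ymon ?a (-2) \<beta> w + of_nat (x+y) * ymon ?a (-1) \<beta> w" by simp
  finally show "zcirc (mono ?a) (mono \<beta>) w = (sc (of_nat x) (mono (add_mset (i,x+1) (add_mset (j,y) \<beta>)))
   + sc (of_nat y) (mono (add_mset (i,x) (add_mset (j,y+1) \<beta>)))
   + sc (of_nat (x+y)) (mono (add_mset (i,x) (add_mset (j,y) \<beta>)))) w"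
    by (simp add: ymon_pair_m2[OF assms] ymon_pair_m1[OF assms] sc_def)
qed

definition Zs :: "mon \<Rightarrow> mon \<Rightarrow> vec" where
  "Zs a b = (\<lambda>w. \<Sum>k\<le>wt a. of_nat (wt a choose k) * ymon a (int k - 1) b w)"

lemma Zs_pair:
  assumes "absent \<beta> i" "absent \<beta> j" "x \<ge> 1" "y \<ge> 1"
  shows "Zs {#(i,x),(j,y)#} \<beta> = mono (add_mset (i,x) (add_mset (j,y) \<beta>))"
proof
  fix w
  let ?a = "{#(i,x),(j,y)#}"
  let ?f = "\<lambda>k. of_nat ((x+y) choose k) * ymon ?a (int k - 1) \<beta> w"
  have "Zs ?a \<beta> w = (\<Sum>k\<le>x+y. ?f k)" unfolding Zs_def by simp
  also have "\<dots> = (\<Sum>k\<in>{0}. ?f k)"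
  proof (rule sum.mono_neutral_right)
    show "\<forall>k\<in>{..x+y} - {0}. ?f k = 0"
      using ymon_pair_pos[OF assms] by auto
  qed auto
  finally show "Zs ?a \<beta> w = mono (add_mset (i,x) (add_mset (j,y) \<beta>)) w"
    by (simp add: ymon_pair_m1[OF assms])
qed

lemma supp_wcomp: "supp (wcomp d u) = {a\<in>supp u. wt a = d}"
  by (auto simp: supp_def wcomp_def)

lemma zstar_formula:
  assumes fu: "finite (supp u)" and fv: "finite (supp v)"
  shows "zstar u v w = (\<Sum>a\<in>supp u. \<Sum>b\<in>supp v. u a * v b * Zs a b w)"
proof -
  let ?A = "\<lambda>d. {a\<in>supp u. wt a = d}"
  let ?G = "\<lambda>a k. \<Sum>b\<in>supp v. u a * v b * ymon a (int k - 1) b w"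
  have Y: "Ymode (wcomp d u) p v w = (\<Sum>a\<in>?A d. \<Sum>b\<in>supp v. u a * v b * ymon a p b w)" for d p
    unfolding Ymode_def supp_wcomp by (rule sum.cong) (auto simp: wcomp_def)
  have "zstar u v w = (\<Sum>d\<in>wt ` supp u. \<Sum>k\<le>d. of_nat (d choose k) * (\<Sum>a\<in>?A d. ?G a k))"
    unfolding zstar_def Y by simp
  also have "\<dots> = (\<Sum>d\<in>wt ` supp u. \<Sum>a\<in>?A d. \<Sum>k\<le>wt a. of_nat (wt a choose k) * ?G a k)"
  proof (rule sum.cong[OF refl])
    fix d assume "d \<in> wt ` supp u"
    have "(\<Sum>k\<le>d. of_nat (d choose k) * (\<Sum>a\<in>?A d. ?G a k)) = (\<Sum>k\<le>d. \<Sum>a\<in>?A d. of_nat (d choose k) * ?G a k)"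
      by (simp add: sum_distrib_left)
    also have "\<dots> = (\<Sum>a\<in>?A d. \<Sum>k\<le>d. of_nat (d choose k) * ?G a k)"
      by (rule sum.swap)
    also have "\<dots> = (\<Sum>a\<in>?A d. \<Sum>k\<le>wt a. of_nat (wt a choose k) * ?G a k)"
      by (rule sum.cong) auto
    finally show "(\<Sum>k\<le>d. of_nat (d choose k) * (\<Sum>a\<in>?A d. ?G a k)) = (\<Sum>a\<in>?A d. \<Sum>k\<le>wt a. of_nat (wt a choose k) * ?G a k)" .
  qed
  also have "\<dots> = (\<Sum>a\<in>supp u. \<Sum>k\<le>wt a. of_nat (wt a choose k) * ?G a k)"
    by (rule sum.image_gen[OF fu, symmetric])
  also have "\<dots> = (\<Sum>a\<in>supp u. \<Sum>b\<in>supp v. u a * v b * Zs a b w)"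
  proof (rule sum.cong[OF refl])
    fix a
    have "(\<Sum>k\<le>wt a. of_nat (wt a choose k) * ?G a k) = (\<Sum>k\<le>wt a. \<Sum>b\<in>supp v. u a * v b * (of_nat (wt a choose k) * ymon a (int k - 1) b w))"
      by (simp add: sum_distrib_left mult_ac)
    also have "\<dots> = (\<Sum>b\<in>supp v. \<Sum>k\<le>wt a. u a * v b * (of_nat (wt a choose k) * ymon a (int k - 1) b w))"
      by (rule sum.swap)
    also have "\<dots> = (\<Sum>b\<in>supp v. u a * v b * Zs a b w)"
      by (simp add: Zs_def sum_distrib_left)
    finally show "(\<Sum>k\<le>wt a. of_nat (wt a choose k) * ?G a k) = (\<Sum>b\<in>supp v. u a * v b * Zs a b w)" .
  qed
  finally show ?thesis .
qed



lemma cspan_base: "x \<in> S \<Longrightarrow> x \<in> cspan S"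
  unfolding cspan_def by (rule CollectI, rule exI[of _ "{x}"], rule exI[of _ "\<lambda>_. 1"]) auto

lemma cspan_zero: "(\<lambda>_. 0) \<in> cspan S"
  unfolding cspan_def by (rule CollectI, rule exI[of _ "{}"]) auto

lemma cspan_sc: "x \<in> cspan S \<Longrightarrow> sc k x \<in> cspan S"
proof -
  assume "x \<in> cspan S"
  then obtain F c where F: "finite F" "F \<subseteq> S" "x = (\<lambda>m. \<Sum>e\<in>F. c e * e m)" unfolding cspan_def by blast
  show ?thesis unfolding cspan_def
    by (rule CollectI, rule exI[of _ F], rule exI[of _ "\<lambda>e. k * c e"])
       (simp add: F sc_def sum_distrib_left mult.assoc)
qed

lemma sum_if_sub: "finite A \<Longrightarrow> B \<subseteq> A \<Longrightarrow> (\<Sum>e\<in>A. if e \<in> B then f e else 0) = sum f B"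
  using sum.inter_restrict[of A f B] Int_absorb1[of B A] by (simp add: Int_commute)

lemma cspan_add: "x \<in> cspan S \<Longrightarrow> y \<in> cspan S \<Longrightarrow> x + y \<in> cspan S"
proof -
  assume "x \<in> cspan S" "y \<in> cspan S"
  then obtain F c G d where F: "finite F" "F \<subseteq> S" "x = (\<lambda>m. \<Sum>e\<in>F. c e * e m)"
    and G: "finite G" "G \<subseteq> S" "y = (\<lambda>m. \<Sum>e\<in>G. d e * e m)" unfolding cspan_def by blast
  let ?c = "\<lambda>e. (if e \<in> F then c e else 0) + (if e \<in> G then d e else 0)"
  have EQ: "(\<lambda>m. \<Sum>e\<in>F \<union> G. ?c e * e m) = x + y"
  proof
    fix m
    have "(\<Sum>e\<in>F \<union> G. ?c e * e m) = (\<Sum>e\<in>F \<union> G. (if e \<in> F then c e * e m else 0)) + (\<Sum>e\<in>F \<union> G. (if e \<in> G then d e * e m else 0))"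
    proof (subst sum.distrib[symmetric], rule sum.cong[OF refl])
      fix e
      show "?c e * e m = (if e \<in> F then c e * e m else 0) + (if e \<in> G then d e * e m else 0)"
        by (cases "e \<in> F"; cases "e \<in> G") (simp_all add: distrib_right)
    qed
    also have "\<dots> = (\<Sum>e\<in>F. c e * e m) + (\<Sum>e\<in>G. d e * e m)"
      using F(1) G(1) sum_if_sub[of "F \<union> G" F "\<lambda>e. c e * e m"] sum_if_sub[of "F \<union> G" G "\<lambda>e. d e * e m"] by simp
    finally show "(\<Sum>e\<in>F \<union> G. ?c e * e m) = (x + y) m" by (simp add: F G)
  qed
  show ?thesis unfolding cspan_def
    by (rule CollectI, rule exI[of _ "F \<union> G"], rule exI[of _ ?c]) (use F G EQ in auto)
qed

lemma cspan_diff: "x \<in> cspan S \<Longrightarrow> y \<in> cspan S \<Longrightarrow> x - y \<in> cspan S"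
proof -
  assume "x \<in> cspan S" "y \<in> cspan S"
  then have "x + sc (-1) y \<in> cspan S" by (intro cspan_add cspan_sc)
  moreover have "x + sc (-1) y = x - y" by (simp add: fun_eq_iff sc_def)
  ultimately show ?thesis by simp
qed

lemma cspan_sum: "finite F \<Longrightarrow> (\<And>i. i \<in> F \<Longrightarrow> f i \<in> cspan S) \<Longrightarrow> (\<lambda>w. \<Sum>i\<in>F. k i * f i w) \<in> cspan S"
proof (induction F rule: finite_induct)
  case empty then show ?case by (simp add: cspan_zero)
next
  case (insert x F)
  have "(\<lambda>w. \<Sum>i\<in>insert x F. k i * f i w) = sc (k x) (f x) + (\<lambda>w. \<Sum>i\<in>F. k i * f i w)"
    using insert(1,2) by (simp add: fun_eq_iff sc_def)
  moreover have "sc (k x) (f x) + (\<lambda>w. \<Sum>i\<in>F. k i * f i w) \<in> cspan S"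
    using insert by (intro cspan_add cspan_sc) auto
  ultimately show ?case by simp
qed

lemma Ozhu_sc: "x \<in> Ozhu l \<Longrightarrow> sc k x \<in> Ozhu l"
  unfolding Ozhu_def by (rule cspan_sc)
lemma Ozhu_add: "x \<in> Ozhu l \<Longrightarrow> y \<in> Ozhu l \<Longrightarrow> x + y \<in> Ozhu l"
  unfolding Ozhu_def by (rule cspan_add)
lemma Ozhu_diff: "x \<in> Ozhu l \<Longrightarrow> y \<in> Ozhu l \<Longrightarrow> x - y \<in> Ozhu l"
  unfolding Ozhu_def by (rule cspan_diff)
lemma Ozhu_zero: "(\<lambda>_. 0) \<in> Ozhu l"
  unfolding Ozhu_def by (rule cspan_zero)
lemma Ozhu_sum: "finite F \<Longrightarrow> (\<And>i. i \<in> F \<Longrightarrow> f i \<in> Ozhu l) \<Longrightarrow> (\<lambda>w. \<Sum>i\<in>F. k i * f i w) \<in> Ozhu l"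
  unfolding Ozhu_def by (rule cspan_sum)

definition M4 :: "nat \<Rightarrow> nat \<Rightarrow> nat \<Rightarrow> nat \<Rightarrow> nat \<Rightarrow> nat \<Rightarrow> nat \<Rightarrow> nat \<Rightarrow> vec" where
  "M4 i j k m x y z w = mono {#(i,x),(j,y),(k,z),(m,w)#}"

lemma pair_Hplus:
  assumes "i < l" "j < l" "x \<ge> 1" "y \<ge> 1"
  shows "mono {#(i,x),(j,y)#} \<in> Hplus l"
proof -
  have "theta (mono {#(i,x),(j,y)#}) = mono {#(i,x),(j,y)#}" by (auto simp: theta_def mono_def fun_eq_iff)
  then show ?thesis using assms by (auto simp: Hplus_def Hspace_def)
qed

lemma mono_homogeneous: "homogeneous (mono a)"
  unfolding homogeneous_def by (auto simp: mono_def)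

lemma zcirc_in:
  assumes "i < l" "j < l" "x \<ge> 1" "y \<ge> 1" "k < l" "m < l" "z \<ge> 1" "w \<ge> 1"
  shows "zcirc (mono {#(i,x),(j,y)#}) (mono {#(k,z),(m,w)#}) \<in> Ozhu l"
  unfolding Ozhu_def
  by (rule cspan_base) (use assms pair_Hplus mono_homogeneous in blast)

lemma R1:
  assumes l: "i < l" "j < l" "k < l" "m < l" and d: "distinct [i,j,k,m]"
    and g: "x \<ge> 1" "y \<ge> 1" "z \<ge> 1" "w \<ge> 1"
  shows "M4 i j k m (x+1) y z w + M4 i j k m x y z w \<in> Ozhu l"
proof -
  let ?A0 = "M4 i j k m x y z w" and ?A1 = "M4 i j k m (x+1) y z w"
  let ?A2 = "M4 i j k m x (y+1) z w" and ?A3 = "M4 i j k m x y (z+1) w"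
  let ?Rij = "zcirc (mono {#(i,x),(j,y)#}) (mono {#(k,z),(m,w)#})"
  let ?Rik = "zcirc (mono {#(i,x),(k,z)#}) (mono {#(j,y),(m,w)#})"
  let ?Rjk = "zcirc (mono {#(j,y),(k,z)#}) (mono {#(i,x),(m,w)#})"
  have Rij: "?Rij = sc (of_nat x) ?A1 + sc (of_nat y) ?A2 + sc (of_nat (x+y)) ?A0"
    using zcirc_pair[of "{#(k,z),(m,w)#}" i j x y] d g unfolding M4_def absent_def by auto
  have Rik: "?Rik = sc (of_nat x) ?A1 + sc (of_nat z) ?A3 + sc (of_nat (x+z)) ?A0"
    using zcirc_pair[of "{#(j,y),(m,w)#}" i k x z] d g unfolding M4_def absent_def by (auto simp: add_mset_commute)
  have Rjk: "?Rjk = sc (of_nat y) ?A2 + sc (of_nat z) ?A3 + sc (of_nat (y+z)) ?A0"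
    using zcirc_pair[of "{#(i,x),(m,w)#}" j k y z] d g unfolding M4_def absent_def by (auto simp: add_mset_commute)
  have E: "?A1 + ?A0 = sc (1 / (2 * of_nat x)) (?Rij + ?Rik - ?Rjk)"
    unfolding Rij Rik Rjk using g by (auto simp: fun_eq_iff sc_def field_simps)
  have "?Rij \<in> Ozhu l" by (rule zcirc_in) (use l g in auto)
  moreover have "?Rik \<in> Ozhu l" by (rule zcirc_in) (use l g in auto)
  moreover have "?Rjk \<in> Ozhu l" by (rule zcirc_in) (use l g in auto)
  ultimately have "sc (1 / (2 * of_nat x)) (?Rij + ?Rik - ?Rjk) \<in> Ozhu l"
    by (intro Ozhu_sc Ozhu_add Ozhu_diff)
  then show ?thesis unfolding E .
qed





lemma R2a:
  assumes l: "i < l" "j < l" "k < l" "m < l" and d: "distinct [i,j,k,m]"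
    and g: "y \<ge> 1" "z \<ge> 1" "w \<ge> 1" and x: "x \<ge> 1"
  shows "M4 i j k m x y z w - sc ((-1)^(x+1)) (M4 i j k m 1 y z w) \<in> Ozhu l"
  using x
proof (induction x rule: nat_induct_at_least)
  case base
  have "M4 i j k m 1 y z w - sc ((-1)^(1+1)) (M4 i j k m 1 y z w) = (\<lambda>_. 0)"
    by (simp add: fun_eq_iff sc_def)
  then show ?case using Ozhu_zero by simp
next
  case (Suc n)
  have E: "M4 i j k m (Suc n) y z w - sc ((-1)^(Suc n+1)) (M4 i j k m 1 y z w)
      = (M4 i j k m (n+1) y z w + M4 i j k m n y z w) - (M4 i j k m n y z w - sc ((-1)^(n+1)) (M4 i j k m 1 y z w))"
    by (simp add: fun_eq_iff sc_def)
  have "M4 i j k m (n+1) y z w + M4 i j k m n y z w \<in> Ozhu l"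
    using R1[OF l d Suc.hyps g] .
  then show ?case unfolding E using Suc.IH by (rule Ozhu_diff)
qed

lemma sign4: "(-1::complex)^(x+1) * (-1)^(y+1) * (-1)^(z+1) * (-1)^(w+1) = (-1)^(x+y+z+w)"
  by (simp add: power_add)

lemma Q_red:
  assumes l: "a < l" "b < l" "c < l" "d < l" and dd: "distinct [a,b,c,d]"
    and g: "x \<ge> 1" "y \<ge> 1" "z \<ge> 1" "w \<ge> 1"
  shows "M4 a b c d x y z w - sc ((-1)^(x+y+z+w)) (M4 a b c d 1 1 1 1) \<in> Ozhu l"
proof -
  define sx where "sx = (-1::complex)^(x+1)"
  define sy where "sy = (-1::complex)^(y+1)"
  define sz where "sz = (-1::complex)^(z+1)"
  define sw where "sw = (-1::complex)^(w+1)"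
  have T1: "M4 a b c d x y z w - sc sx (M4 a b c d 1 y z w) \<in> Ozhu l"
    unfolding sx_def by (rule R2a) (use l dd g in auto)
  have T2: "M4 b a c d y 1 z w - sc sy (M4 b a c d 1 1 z w) \<in> Ozhu l"
    unfolding sy_def by (rule R2a) (use l dd g in auto)
  have T3: "M4 c a b d z 1 1 w - sc sz (M4 c a b d 1 1 1 w) \<in> Ozhu l"
    unfolding sz_def by (rule R2a) (use l dd g in auto)
  have T4: "M4 d a b c w 1 1 1 - sc sw (M4 d a b c 1 1 1 1) \<in> Ozhu l"
    unfolding sw_def by (rule R2a) (use l dd g in auto)
  have p2: "M4 b a c d y 1 z w = M4 a b c d 1 y z w" "M4 b a c d 1 1 z w = M4 a b c d 1 1 z w"
    by (simp_all add: M4_def add_mset_commute)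
  have p3: "M4 c a b d z 1 1 w = M4 a b c d 1 1 z w" "M4 c a b d 1 1 1 w = M4 a b c d 1 1 1 w"
    by (simp_all add: M4_def add_mset_commute)
  have p4: "M4 d a b c w 1 1 1 = M4 a b c d 1 1 1 w" "M4 d a b c 1 1 1 1 = M4 a b c d 1 1 1 1"
    by (simp_all add: M4_def add_mset_commute)
  have s: "sx * sy * sz * sw = (-1)^(x+y+z+w)" unfolding sx_def sy_def sz_def sw_def by (rule sign4)
  have E: "M4 a b c d x y z w - sc ((-1)^(x+y+z+w)) (M4 a b c d 1 1 1 1)
     = (M4 a b c d x y z w - sc sx (M4 a b c d 1 y z w))
     + sc sx (M4 b a c d y 1 z w - sc sy (M4 b a c d 1 1 z w))
     + sc (sx * sy) (M4 c a b d z 1 1 w - sc sz (M4 c a b d 1 1 1 w))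
     + sc (sx * sy * sz) (M4 d a b c w 1 1 1 - sc sw (M4 d a b c 1 1 1 1))"
    unfolding p2 p3 p4 s[symmetric] by (simp add: fun_eq_iff sc_def algebra_simps)
  show ?thesis unfolding E
    using T1 T2 T3 T4 by (intro Ozhu_add Ozhu_sc)
qed


definition SA :: "nat \<Rightarrow> nat \<Rightarrow> mon set" where
  "SA a b = (\<lambda>(p,q). {#(a,p),(b,q)#}) ` ({1..5::nat} \<times> {1..5::nat})"

definition sg :: "mon \<Rightarrow> complex" where
  "sg m = (-1) ^ wt m"

definition ev :: "mon set \<Rightarrow> vec \<Rightarrow> complex" where
  "ev S x = (\<Sum>m\<in>S. x m * sg m)"

lemma finite_SA[simp]: "finite (SA a b)"
  unfolding SA_def by simp

lemma D_in:
  assumes l: "a < l" "b < l" "c < l" "d < l" and dd: "distinct [a,b,c,d]"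
    and A: "\<alpha> \<in> SA a b" and B: "\<beta> \<in> SA c d"
  shows "Zs \<alpha> \<beta> - sc (sg \<alpha> * sg \<beta>) (M4 a b c d 1 1 1 1) \<in> Ozhu l"
proof -
  obtain p q where pq: "\<alpha> = {#(a,p),(b,q)#}" "p \<ge> 1" "q \<ge> 1" using A unfolding SA_def by auto
  obtain r s where rs: "\<beta> = {#(c,r),(d,s)#}" "r \<ge> 1" "s \<ge> 1" using B unfolding SA_def by auto
  have E1: "Zs \<alpha> \<beta> = M4 a b c d p q r s"
    unfolding pq rs M4_def using dd pq rs by (subst Zs_pair) (auto simp: absent_def)
  have E2: "sg \<alpha> * sg \<beta> = (-1)^(p+q+r+s)"
    unfolding pq rs sg_def by (simp add: power_add)
  show ?thesis unfolding E1 E2 by (rule Q_red[OF l dd pq(2,3) rs(2,3)])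
qed

lemma cart: "(\<Sum>i\<in>A \<times> B. h (fst i) (snd i)) = (\<Sum>a\<in>A. \<Sum>b\<in>B. h a b)"
  by (simp add: sum.cartesian_product split_def)
lemma prodsum: "(\<Sum>m\<in>A. (x m::complex) * g m) * (\<Sum>m\<in>B. y m * g m) = (\<Sum>a\<in>A. \<Sum>b\<in>B. x a * y b * (g a * g b))"
  unfolding sum_product by (intro sum.cong refl) (simp add: mult_ac)
lemma diffsum: "(\<Sum>a\<in>A. \<Sum>b\<in>B. (x a::complex) * y b * (Z a b - s a * s b * q)) = (\<Sum>a\<in>A. \<Sum>b\<in>B. x a * y b * Z a b) - (\<Sum>a\<in>A. \<Sum>b\<in>B. x a * y b * (s a * s b)) * q"
  by (simp add: sum_subtractf sum_distrib_right right_diff_distrib mult.assoc)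

lemma ext_sum:
  assumes "finite T" "S \<subseteq> T" "\<And>m. m \<in> T \<Longrightarrow> m \<notin> S \<Longrightarrow> (f m::complex) = 0"
  shows "sum f S = sum f T"
  using sum.mono_neutral_left[OF assms(1,2)] assms(3) by blast

lemma KEY:
  assumes l: "a < l" "b < l" "c < l" "d < l" and dd: "distinct [a,b,c,d]"
    and sx: "supp x \<subseteq> SA a b" and sy: "supp y \<subseteq> SA c d"
  shows "zstar x y - sc (ev (SA a b) x * ev (SA c d) y) (M4 a b c d 1 1 1 1) \<in> Ozhu l"
proof -
  let ?A = "SA a b" and ?B = "SA c d" and ?Q = "M4 a b c d 1 1 1 1"
  have fx: "finite (supp x)" by (rule finite_subset[OF sx finite_SA])
  have fy: "finite (supp y)" by (rule finite_subset[OF sy finite_SA])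
  have zx: "x m = 0" if "m \<notin> supp x" for m using that by (simp add: supp_def)
  have zy: "y m = 0" if "m \<notin> supp y" for m using that by (simp add: supp_def)
  let ?k = "\<lambda>i. x (fst i) * y (snd i)"
  let ?f = "\<lambda>i. Zs (fst i) (snd i) - sc (sg (fst i) * sg (snd i)) ?Q"
  have E: "zstar x y - sc (ev ?A x * ev ?B y) ?Q = (\<lambda>w. \<Sum>i\<in>?A \<times> ?B. ?k i * ?f i w)"
  proof
    fix w
    have "zstar x y w = (\<Sum>\<alpha>\<in>supp x. \<Sum>\<beta>\<in>supp y. x \<alpha> * y \<beta> * Zs \<alpha> \<beta> w)"
      by (rule zstar_formula[OF fx fy])
    also have "\<dots> = (\<Sum>\<alpha>\<in>supp x. \<Sum>\<beta>\<in>?B. x \<alpha> * y \<beta> * Zs \<alpha> \<beta> w)"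
    proof (rule sum.cong[OF refl])
      fix \<alpha>
      show "(\<Sum>\<beta>\<in>supp y. x \<alpha> * y \<beta> * Zs \<alpha> \<beta> w) = (\<Sum>\<beta>\<in>?B. x \<alpha> * y \<beta> * Zs \<alpha> \<beta> w)"
        by (rule ext_sum[OF finite_SA sy]) (simp add: zy)
    qed
    also have "\<dots> = (\<Sum>\<alpha>\<in>?A. \<Sum>\<beta>\<in>?B. x \<alpha> * y \<beta> * Zs \<alpha> \<beta> w)"
      by (rule ext_sum[OF finite_SA sx]) (simp add: zx)
    finally have z: "zstar x y w = (\<Sum>\<alpha>\<in>?A. \<Sum>\<beta>\<in>?B. x \<alpha> * y \<beta> * Zs \<alpha> \<beta> w)" .
    have e: "ev ?A x * ev ?B y = (\<Sum>\<alpha>\<in>?A. \<Sum>\<beta>\<in>?B. x \<alpha> * y \<beta> * (sg \<alpha> * sg \<beta>))"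
      unfolding ev_def by (rule prodsum)
    have "(\<Sum>i\<in>?A \<times> ?B. ?k i * ?f i w) = (\<Sum>i\<in>?A \<times> ?B. (\<lambda>\<alpha> \<beta>. x \<alpha> * y \<beta> * (Zs \<alpha> \<beta> w - sg \<alpha> * sg \<beta> * ?Q w)) (fst i) (snd i))"
      by (simp add: sc_def)
    also have "\<dots> = (\<Sum>\<alpha>\<in>?A. \<Sum>\<beta>\<in>?B. x \<alpha> * y \<beta> * (Zs \<alpha> \<beta> w - sg \<alpha> * sg \<beta> * ?Q w))"
      by (rule cart)
    also have "\<dots> = (\<Sum>\<alpha>\<in>?A. \<Sum>\<beta>\<in>?B. x \<alpha> * y \<beta> * Zs \<alpha> \<beta> w) - (\<Sum>\<alpha>\<in>?A. \<Sum>\<beta>\<in>?B. x \<alpha> * y \<beta> * (sg \<alpha> * sg \<beta>)) * ?Q w"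
      by (rule diffsum)
    finally have C: "(\<Sum>i\<in>?A \<times> ?B. ?k i * ?f i w) = (\<Sum>\<alpha>\<in>?A. \<Sum>\<beta>\<in>?B. x \<alpha> * y \<beta> * Zs \<alpha> \<beta> w) - (\<Sum>\<alpha>\<in>?A. \<Sum>\<beta>\<in>?B. x \<alpha> * y \<beta> * (sg \<alpha> * sg \<beta>)) * ?Q w" .
    have "(zstar x y - sc (ev ?A x * ev ?B y) ?Q) w = zstar x y w - ev ?A x * ev ?B y * ?Q w"
      by (simp add: sc_def)
    then show "(zstar x y - sc (ev ?A x * ev ?B y) ?Q) w = (\<Sum>i\<in>?A \<times> ?B. ?k i * ?f i w)"
      unfolding C z e .
  qed
  show ?thesis unfolding E
    by (rule Ozhu_sum[OF finite_cartesian_product[OF finite_SA finite_SA]], rule D_in[OF l dd]) (auto simp: mem_Times_iff)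
qed


lemma Sv_eq: "n \<ge> 1 \<Longrightarrow> Sv x y n = mono {#(x,1),(y,n)#}"
  unfolding Sv_def vac_def by (simp add: hmon_neg)

lemma ev_sc[simp]: "ev S (sc c v) = c * ev S v"
  unfolding ev_def sc_def by (simp add: sum_distrib_left mult.assoc)

lemma ev_add[simp]: "ev S (u + v) = ev S u + ev S v"
  unfolding ev_def by (simp add: sum.distrib distrib_right)

lemma ev_mono: "finite S \<Longrightarrow> ev S (mono \<alpha>) = (if \<alpha> \<in> S then sg \<alpha> else 0)"
proof -
  have "ev S (mono \<alpha>) = (\<Sum>m\<in>S. if m = \<alpha> then sg m else 0)"
    unfolding ev_def mono_def by (rule sum.cong) auto
  then show "finite S \<Longrightarrow> ?thesis" by (simp add: sum.delta)
qed

lemma mem_SA: "1 \<le> p \<Longrightarrow> p \<le> 5 \<Longrightarrow> 1 \<le> q \<Longrightarrow> q \<le> 5 \<Longrightarrow> {#(a,p),(b,q)#} \<in> SA a b"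
  unfolding SA_def by (rule image_eqI[of _ _ "(p,q)"]) auto

lemma mem_SA': "1 \<le> p \<Longrightarrow> p \<le> 5 \<Longrightarrow> 1 \<le> q \<Longrightarrow> q \<le> 5 \<Longrightarrow> {#(b,q),(a,p)#} \<in> SA a b"
  using mem_SA[of p q a b] by (simp add: add_mset_commute)

lemma sg_pair[simp]: "sg {#(i,x),(j,y)#} = (-1)^(x+y)"
  unfolding sg_def by simp

lemma supp_cspan:
  assumes "\<forall>e\<in>S. supp e \<subseteq> A" "x \<in> cspan S"
  shows "supp x \<subseteq> A"
proof
  fix m assume m: "m \<in> supp x"
  obtain F c where F: "finite F" "F \<subseteq> S" "x = (\<lambda>m. \<Sum>e\<in>F. c e * e m)"
    using assms(2) unfolding cspan_def by blast
  show "m \<in> A"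
  proof (rule ccontr)
    assume "m \<notin> A"
    then have "\<forall>e\<in>F. e m = 0" using assms(1) F(2) unfolding supp_def by blast
    then have "x m = 0" using F(3) by (auto intro!: sum.neutral)
    then show False using m unfolding supp_def by simp
  qed
qed

lemma ev_cspan:
  assumes "\<forall>e\<in>S. ev T e = 0" "x \<in> cspan S"
  shows "ev T x = 0"
proof -
  obtain F c where F: "finite F" "F \<subseteq> S" "x = (\<lambda>m. \<Sum>e\<in>F. c e * e m)"
    using assms(2) unfolding cspan_def by blast
  have "ev T x = (\<Sum>m\<in>T. \<Sum>e\<in>F. c e * (e m * sg m))"
    unfolding ev_def F(3) by (simp add: sum_distrib_right mult.assoc)
  also have "\<dots> = (\<Sum>e\<in>F. c e * ev T e)"
    unfolding ev_def by (subst sum.swap) (simp add: sum_distrib_left)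
  also have "\<dots> = 0" using assms(1) F(2) by (simp add: subset_iff)
  finally show ?thesis .
qed

lemma supp_gen:
  assumes "a \<noteq> b"
  shows "supp (Eu a b) \<subseteq> SA a b" "supp (Eu b a) \<subseteq> SA a b" "supp (Et a b) \<subseteq> SA a b"
        "supp (Et b a) \<subseteq> SA a b" "supp (Lam a b) \<subseteq> SA a b" "supp (Sv a b 1) \<subseteq> SA a b"
  unfolding Eu_def Et_def Lam_def Sv_eq[OF order_refl] 
  by (auto simp: Sv_eq supp_def sc_def mono_def mem_SA mem_SA' split: if_splits)

lemma ev_gen:
  shows "ev (SA a b) (Eu a b) = 0" "ev (SA a b) (Eu b a) = 0" "ev (SA a b) (Et a b) = 0"
        "ev (SA a b) (Et b a) = 0" "ev (SA a b) (Lam a b) = 1" "ev (SA a b) (Sv a b 1) = 1"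
  unfolding Eu_def Et_def Lam_def
  by (simp_all add: Sv_eq ev_mono mem_SA mem_SA')

lemma zero_part:
  assumes l: "a < l" "b < l" "c < l" "d < l" and dd: "distinct [a,b,c,d]"
    and x: "x \<in> Mspace a b" and y: "y \<in> Mbar c d"
  shows "zstar x y \<in> Ozhu l \<and> zstar y x \<in> Ozhu l"
proof -
  have ab: "a \<noteq> b" and cd: "c \<noteq> d" using dd by auto
  have sx: "supp x \<subseteq> SA a b"
    by (rule supp_cspan[OF _ x[unfolded Mspace_def]]) (use supp_gen[OF ab] in auto)
  have sy: "supp y \<subseteq> SA c d"
    by (rule supp_cspan[OF _ y[unfolded Mbar_def]]) (use supp_gen[OF cd] in auto)
  have ex: "ev (SA a b) x = 0"
    by (rule ev_cspan[OF _ x[unfolded Mspace_def]]) (use ev_gen in auto)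
  have dd': "distinct [c,d,a,b]" using dd by auto
  have "zstar x y - sc (ev (SA a b) x * ev (SA c d) y) (M4 a b c d 1 1 1 1) \<in> Ozhu l"
    by (rule KEY[OF l dd sx sy])
  moreover have "zstar x y - sc (ev (SA a b) x * ev (SA c d) y) (M4 a b c d 1 1 1 1) = zstar x y"
    unfolding ex by (simp add: fun_eq_iff sc_def)
  moreover have "zstar y x - sc (ev (SA c d) y * ev (SA a b) x) (M4 c d a b 1 1 1 1) \<in> Ozhu l"
    by (rule KEY[OF l(3,4,1,2) dd' sy sx])
  moreover have "zstar y x - sc (ev (SA c d) y * ev (SA a b) x) (M4 c d a b 1 1 1 1) = zstar y x"
    unfolding ex by (simp add: fun_eq_iff sc_def)
  ultimately show ?thesis by metis
qed

theorem lemma5p3: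
  fixes l a b c d :: nat
  assumes "a < l" "b < l" "c < l" "d < l"
    and "distinct [a, b, c, d]"
  shows "(\<forall>x\<in>Mspace a b. \<forall>y\<in>Mbar c d. zstar x y \<in> Ozhu l)
       \<and> (\<forall>x\<in>Mbar c d. \<forall>y\<in>Mspace a b. zstar x y \<in> Ozhu l)
       \<and> zstar (Lam a b) (Lam c d) - zstar (Sv a b 1) (Sv c d 1) \<in> Ozhu l"
proof (intro conjI ballI)
  fix x y assume "x \<in> Mspace a b" "y \<in> Mbar c d"
  then show "zstar x y \<in> Ozhu l" using zero_part[OF assms] by blast
next
  fix x y assume "x \<in> Mbar c d" "y \<in> Mspace a b"
  then show "zstar x y \<in> Ozhu l" using zero_part[OF assms] by blast
next
  have ab: "a \<noteq> b" and cd: "c \<noteq> d" using assms(5) by auto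
  have A: "zstar (Lam a b) (Lam c d) - sc (ev (SA a b) (Lam a b) * ev (SA c d) (Lam c d)) (M4 a b c d 1 1 1 1) \<in> Ozhu l"
    by (rule KEY[OF assms]) (use supp_gen[OF ab] supp_gen[OF cd] in auto)
  have B: "zstar (Sv a b 1) (Sv c d 1) - sc (ev (SA a b) (Sv a b 1) * ev (SA c d) (Sv c d 1)) (M4 a b c d 1 1 1 1) \<in> Ozhu l"
    by (rule KEY[OF assms]) (use supp_gen[OF ab] supp_gen[OF cd] in auto)
  have "(zstar (Lam a b) (Lam c d) - sc (ev (SA a b) (Lam a b) * ev (SA c d) (Lam c d)) (M4 a b c d 1 1 1 1))
      - (zstar (Sv a b 1) (Sv c d 1) - sc (ev (SA a b) (Sv a b 1) * ev (SA c d) (Sv c d 1)) (M4 a b c d 1 1 1 1))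
      = zstar (Lam a b) (Lam c d) - zstar (Sv a b 1) (Sv c d 1)"
    unfolding ev_gen by (simp add: fun_eq_iff sc_def)
  then show "zstar (Lam a b) (Lam c d) - zstar (Sv a b 1) (Sv c d 1) \<in> Ozhu l"
    using Ozhu_diff[OF A B] by simp
qed


end
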